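(* For any $n,T\in\mathbb{N}$ and $\epsilon>0$, the exponential projected walk algorithm $\mathrm{EPW}(T,\epsilon)$ is an $\epsilon$-differentially private prediction algorithm.
   Context: Let $N\in\mathbb{N}$, $[N]=\{1,\dots,N\}$. For $A\le B$, $\mathrm{proj}_{[A,B]}(u)$ denotes the projection of $u\in\mathbb{R}$ onto $[A,B]$. The algorithm $\mathrm{EPW}(T,\epsilon)$ takes a dataset $S=((x_1,y_1),\dots,(x_n,y_n))\in([N]\times\{0,1\})^n$, arranged in sorted order $x_1\le x_2\le\dots\le x_n$, and a query point $x\in[N]$. Let $t$ be the number of examples with $x_i\le x$. Set $v_0=0$ and for $i=1,\dots,t$ set $v_i=\mathrm{proj}_{[-T,T]}(v_{i-1}+(2y_i-1))$. Output $b=1$ with probability $\frac{e^{\epsilon v_t/2}}{1+e^{\epsilon v_t/2}}$ and $b=0$ otherwise. A prediction algorithm $M$ is an $\epsilon$-differentially private prediction algorithm if for every query point $x$, for all datasets $S,S'$ differing in a single element and every $b$, $\Pr[M(S,x)=b]\le e^{\epsilon}\Pr[M(S',x)=b]$. *)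

theory Defs
  imports Complex_Main "HOL-Library.Product_Lexorder"
begin

text \<open>The algorithm first arranges the dataset in sorted order; ties in x are broken
  lexicographically by the label (a fixed deterministic tie-break).\<close>

definition proj :: "int \<Rightarrow> int \<Rightarrow> int \<Rightarrow> int" where
  "proj A B u = max A (min B u)"

definition epw_walk :: "nat \<Rightarrow> bool list \<Rightarrow> int" where
  "epw_walk T ys = foldl (\<lambda>v y. proj (- int T) (int T) (v + (2 * of_bool y - 1))) 0 ys"

definition epw_value :: "nat \<Rightarrow> (nat \<times> bool) list \<Rightarrow> nat \<Rightarrow> int" where
  "epw_value T S x =
     (let t = length (filter (\<lambda>p. fst p \<le> x) S)
      in epw_walk T (map snd (take t (sort S))))"

text \<open>Output distribution of EPW(T, eps): probability that the output equals b.\<close>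
definition EPW :: "nat \<Rightarrow> real \<Rightarrow> (nat \<times> bool) list \<Rightarrow> nat \<Rightarrow> bool \<Rightarrow> real" where
  "EPW T eps S x b =
     (let v = real_of_int (epw_value T S x);
          p = exp (eps * v / 2) / (1 + exp (eps * v / 2))
      in if b then p else 1 - p)"

definition valid_dataset :: "nat \<Rightarrow> nat \<Rightarrow> (nat \<times> bool) list \<Rightarrow> bool" where
  "valid_dataset N n S \<longleftrightarrow> length S = n \<and> (\<forall>p \<in> set S. fst p \<in> {1..N})"

definition neighbours :: "'a list \<Rightarrow> 'a list \<Rightarrow> bool" where
  "neighbours S S' \<longleftrightarrow> length S = length S' \<and>
     (\<exists>i < length S. \<forall>j < length S. j \<noteq> i \<longrightarrow> S ! j = S' ! j)"

text \<open>M S x b = Pr[M(S,x) = b]. M is an eps-DP prediction algorithm (datasets of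
  size n over [N] \<times> {0,1}).\<close>
definition dp_prediction :: "nat \<Rightarrow> nat \<Rightarrow> real \<Rightarrow>
    ((nat \<times> bool) list \<Rightarrow> nat \<Rightarrow> bool \<Rightarrow> real) \<Rightarrow> bool" where
  "dp_prediction N n eps M \<longleftrightarrow>
     (\<forall>x \<in> {1..N}. \<forall>S S'. valid_dataset N n S \<and> valid_dataset N n S' \<and> neighbours S S'
        \<longrightarrow> (\<forall>b. M S x b \<le> exp eps * M S' x b))"

end

theory Submission
  imports Defs "HOL-Library.Multiset"
begin

definition stepf :: "nat \<Rightarrow> int \<Rightarrow> bool \<Rightarrow> int" where
  "stepf T v y = proj (- int T) (int T) (v + (2 * of_bool y - 1))"

definition W :: "nat \<Rightarrow> int \<Rightarrow> bool list \<Rightarrow> int" where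
  "W T v ys = foldl (stepf T) v ys"

lemma epw_walk_W: "epw_walk T ys = W T 0 ys"
  unfolding epw_walk_def W_def stepf_def by simp

lemma W_append: "W T v (as @ bs) = W T (W T v as) bs"
  unfolding W_def by simp

lemma W_Cons: "W T v (y # bs) = W T (stepf T v y) bs"
  unfolding W_def by simp

lemma W_lip: "\<bar>W T v ys - W T w ys\<bar> \<le> \<bar>v - w\<bar>"
proof (induction ys arbitrary: v w)
  case Nil then show ?case by (simp add: W_def)
next
  case (Cons y ys)
  have "\<bar>stepf T v y - stepf T w y\<bar> \<le> \<bar>v - w\<bar>"
    unfolding stepf_def proj_def by (cases y) auto
  then show ?case using Cons.IH[of "stepf T v y" "stepf T w y"] by (simp add: W_Cons)
qed

lemma W_range: "\<bar>v\<bar> \<le> int T \<Longrightarrow> \<bar>W T v ys\<bar> \<le> int T"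
proof (induction ys arbitrary: v)
  case Nil then show ?case by (simp add: W_def)
next
  case (Cons y ys)
  have "\<bar>stepf T v y\<bar> \<le> int T" unfolding stepf_def proj_def by auto
  then show ?case using Cons.IH by (simp add: W_Cons)
qed

lemma W_insert: "\<bar>W T 0 (as @ y # bs) - W T 0 (as @ bs)\<bar> \<le> 1"
proof -
  let ?u = "W T 0 as"
  have u: "\<bar>?u\<bar> \<le> int T" using W_range[of 0 T as] by simp
  have s: "\<bar>stepf T ?u y - ?u\<bar> \<le> 1"
    using u unfolding stepf_def proj_def by (cases y) auto
  show ?thesis
    using W_lip[of T "stepf T ?u y" bs ?u] s by (simp add: W_append W_Cons)
qed

lemma insort_split: "\<exists>k. insort e R = take k R @ e # drop k R"
proof (induction R)
  case Nil then show ?case by simp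
next
  case (Cons a R)
  then obtain k where k: "insort e R = take k R @ e # drop k R" by blast
  show ?case
  proof (cases "e \<le> a")
    case True then show ?thesis by (intro exI[of _ 0]) simp
  next
    case False then show ?thesis using k by (intro exI[of _ "Suc k"]) simp
  qed
qed

lemma W_insort: "\<bar>W T 0 (map snd (insort e R)) - W T 0 (map snd R)\<bar> \<le> 1"
proof -
  obtain k where k: "insort e R = take k R @ e # drop k R" using insort_split by blast
  have "map snd R = map snd (take k R) @ map snd (drop k R)"
    by (metis append_take_drop_id map_append)
  then show ?thesis using k W_insert[of T "map snd (take k R)" "snd e" "map snd (drop k R)"]
    by simp
qed

lemma sorted_filter_take:
  fixes P :: "'a::linorder \<Rightarrow> bool"
  assumes "sorted ys" and down: "\<And>p q. p \<le> q \<Longrightarrow> P q \<Longrightarrow> P p"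
  shows "take (length (filter P ys)) ys = filter P ys"
  using assms(1)
proof (induction ys)
  case Nil then show ?case by simp
next
  case (Cons a ys)
  show ?case
  proof (cases "P a")
    case True then show ?thesis using Cons by simp
  next
    case False
    have "\<forall>q\<in>set ys. \<not> P q" using Cons.prems False down by auto
    then have "filter P ys = []" by (simp add: filter_empty_conv)
    then show ?thesis using False by simp
  qed
qed

lemma epw_value_alt:
  "epw_value T S x = W T 0 (map snd (sort (filter (\<lambda>p. fst p \<le> x) S)))"
proof -
  let ?P = "\<lambda>p::nat\<times>bool. fst p \<le> x"
  have len: "length (filter ?P S) = length (filter ?P (sort S))"
    by (metis filter_sort length_sort)
  have down: "\<And>p q. p \<le> q \<Longrightarrow> ?P q \<Longrightarrow> ?P p"
    by (auto simp: less_eq_prod_def)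
  have "take (length (filter ?P S)) (sort S) = filter ?P (sort S)"
    using sorted_filter_take[of "sort S" ?P, OF sorted_sort down] len by simp
  also have "\<dots> = sort (filter ?P S)" by (simp add: filter_sort)
  finally show ?thesis unfolding epw_value_def epw_walk_W Let_def by simp
qed

lemma sort_mset_eq: "mset xs = mset ys \<Longrightarrow> sort xs = sort (ys::'a::linorder list)"
  by (metis mset_sort properties_for_sort sorted_sort)

lemma value_cons:
  "\<bar>W T 0 (map snd (sort (filter P (e # D)))) - W T 0 (map snd (sort (filter P D)))\<bar> \<le> 1"
  by (cases "P e") (simp_all add: W_insort)

lemma neighbours_close:
  assumes "neighbours S S'"
  shows "\<bar>epw_value T S x - epw_value T S' x\<bar> \<le> 2"
proof -
  from assms obtain i where len: "length S = length S'" and i: "i < length S"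
    and eq: "\<forall>j < length S. j \<noteq> i \<longrightarrow> S ! j = S' ! j"
    unfolding neighbours_def by blast
  define D where "D = take i S @ drop (Suc i) S"
  have S'eq: "S' = S[i := S' ! i]"
    by (rule nth_equalityI) (use len eq i in \<open>auto simp: nth_list_update\<close>)
  have m1: "mset S = mset (S ! i # D)"
    unfolding D_def using i
    by (metis id_take_nth_drop mset.simps(2) mset_append add_mset_add_single union_commute union_assoc
        Cons_nth_drop_Suc append_take_drop_id)
  have "mset S' = mset (S' ! i # D)"
    unfolding D_def using i len
    by (subst (1) S'eq) (metis Cons_nth_drop_Suc mset.simps(2) mset_append
        add_mset_add_single union_assoc union_commute upd_conv_take_nth_drop)
  then have m2: "mset S' = mset (S' ! i # D)" .
  let ?P = "\<lambda>p::nat\<times>bool. fst p \<le> x"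
  have e1: "epw_value T S x = W T 0 (map snd (sort (filter ?P (S ! i # D))))"
    unfolding epw_value_alt using m1 by (metis mset_filter sort_mset_eq)
  have e2: "epw_value T S' x = W T 0 (map snd (sort (filter ?P (S' ! i # D))))"
    unfolding epw_value_alt using m2 by (metis mset_filter sort_mset_eq)
  show ?thesis using e1 e2 value_cons[of T ?P "S ! i" D] value_cons[of T ?P "S' ! i" D]
    by linarith
qed

lemma sig_bound:
  fixes a a' eps :: real
  assumes "\<bar>a - a'\<bar> \<le> eps"
  shows "exp a / (1 + exp a) \<le> exp eps * (exp a' / (1 + exp a'))"
    and "1 - exp a / (1 + exp a) \<le> exp eps * (1 - exp a' / (1 + exp a'))"
proof -
  have p: "exp a > 0" "exp a' > 0" "1 + exp a > 0" "1 + exp a' > 0"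
    by (auto intro: add_pos_pos)
  have eps0: "eps \<ge> 0" using assms by linarith
  have k1: "exp a \<le> exp eps * exp a'"
    using assms by (simp add: exp_add[symmetric])
  have k2: "exp a' \<le> exp eps * exp a"
    using assms by (simp add: exp_add[symmetric])
  have k3: "1 \<le> exp eps" using eps0 by simp
  have "exp a * (1 + exp a') \<le> exp eps * exp a' * (1 + exp a)"
  proof -
    have "exp a * (1 + exp a') = exp a + exp a * exp a'" by (simp add: algebra_simps)
    also have "\<dots> \<le> exp eps * exp a' + exp eps * exp a' * exp a"
      using k1 k3 p by (intro add_mono) (auto simp: mult_right_mono[of 1 "exp eps"] mult.commute)
    also have "\<dots> = exp eps * exp a' * (1 + exp a)" by (simp add: algebra_simps)
    finally show ?thesis .
  qed
  then show "exp a / (1 + exp a) \<le> exp eps * (exp a' / (1 + exp a'))"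
    using p by (simp add: field_simps add_pos_pos)
  have "1 + exp a' \<le> exp eps * (1 + exp a)" using add_mono[OF k3 k2] by (simp only: distrib_left mult_1_right)
  moreover have "1 - exp a / (1 + exp a) = 1 / (1 + exp a)"
    "1 - exp a' / (1 + exp a') = 1 / (1 + exp a')" using p(3,4) by (simp_all add: field_simps)
  ultimately show "1 - exp a / (1 + exp a) \<le> exp eps * (1 - exp a' / (1 + exp a'))"
  proof -
    assume h: "1 + exp a' \<le> exp eps * (1 + exp a)"
      and e: "1 - exp a / (1 + exp a) = 1 / (1 + exp a)"
        "1 - exp a' / (1 + exp a') = 1 / (1 + exp a')"
    have "1 / (1 + exp a) \<le> exp eps * (1 / (1 + exp a'))"
      using h p(3,4) by (simp add: divide_simps mult.commute)
    then show ?thesis using e by simp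
  qed
qed

theorem lemma23:
  fixes N n T :: nat and eps :: real
  assumes "eps > 0"
  shows "dp_prediction N n eps (EPW T eps)"
  unfolding dp_prediction_def
proof (intro ballI allI impI)
  fix x S S' b
  assume "valid_dataset N n S \<and> valid_dataset N n S' \<and> neighbours S S'"
  then have nb: "neighbours S S'" by blast
  let ?v = "real_of_int (epw_value T S x)" and ?w = "real_of_int (epw_value T S' x)"
  have d: "\<bar>?v - ?w\<bar> \<le> 2" using neighbours_close[OF nb, of T x] by linarith
  have "\<bar>eps * ?v / 2 - eps * ?w / 2\<bar> = eps * \<bar>?v - ?w\<bar> / 2"
    using assms by (simp add: abs_mult right_diff_distrib[symmetric] diff_divide_distrib[symmetric])
  also have "\<dots> \<le> eps" using d assms by simp
  finally have ab: "\<bar>eps * ?v / 2 - eps * ?w / 2\<bar> \<le> eps" .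
  show "EPW T eps S x b \<le> exp eps * EPW T eps S' x b"
    unfolding EPW_def Let_def using sig_bound[OF ab] by simp
qed

end
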